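(* Let $n\ge 2$, let $K\subset\mathbb{R}^n$ be a convex body of constant width $\Theta$, and let $\gamma\subset\mathbb{R}^n$ be any curve such that $K\subset\operatorname{co}(\gamma)$. Then $$ \operatorname{length}(\gamma)\ge 2(\pi-1)\sqrt{\frac{n-1}{2\pi}}\cdot\Theta . $$
   Context: $\mathbb{R}^n$ carries the standard Euclidean metric $d$. A convex body is any nonempty compact convex subset of $\mathbb{R}^n$. $\operatorname{co}(A)$ denotes the convex hull of $A$. The support function of $K$ is $h(K,u)=\sup\{(x,u):x\in K\}$ and the width function is $w(K,u)=h(K,u)+h(K,-u)$ for $u$ in the unit sphere $S^{n-1}$; $K$ has constant width $\Theta$ if $w(K,u)=\Theta$ for all $u\in S^{n-1}$. A curve is the image of a continuous map $\varphi:[a,b]\to\mathbb{R}^n$; its length is $\operatorname{length}(\gamma)=\sup\sum_{i=1}^m d(\varphi(t_{i-1}),\varphi(t_i))$ over all partitions $a=t_0<\dots<t_m=b$ (possibly $+\infty$). *)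

theory Defs
  imports "HOL-Analysis.Analysis" "HOL-Library.Extended_Real"
begin

definition convex_body :: "'a::euclidean_space set \<Rightarrow> bool" where
  "convex_body K \<longleftrightarrow> K \<noteq> {} \<and> compact K \<and> convex K"

definition support_fun :: "'a::euclidean_space set \<Rightarrow> 'a \<Rightarrow> real" where
  "support_fun K u = (SUP x\<in>K. x \<bullet> u)"

definition width_fun :: "'a::euclidean_space set \<Rightarrow> 'a \<Rightarrow> real" where
  "width_fun K u = support_fun K u + support_fun K (- u)"

definition constant_width :: "'a::euclidean_space set \<Rightarrow> real \<Rightarrow> bool" where
  "constant_width K \<Theta> \<longleftrightarrow> (\<forall>u\<in>sphere 0 1. width_fun K u = \<Theta>)"

definition partition_of :: "real \<Rightarrow> real \<Rightarrow> real list \<Rightarrow> bool" where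
  "partition_of a b ts \<longleftrightarrow> ts \<noteq> [] \<and> sorted_wrt (<) ts \<and> hd ts = a \<and> last ts = b"

definition curve_length :: "(real \<Rightarrow> 'a::euclidean_space) \<Rightarrow> real \<Rightarrow> real \<Rightarrow> ereal" where
  "curve_length \<phi> a b =
     (SUP ts\<in>{ts. partition_of a b ts}.
        ereal (\<Sum>(s,t)\<leftarrow>zip ts (tl ts). dist (\<phi> s) (\<phi> t)))"

end

theory Submission
  imports Defs
begin


lemma bessel:
  fixes v :: "'a::euclidean_space"
  assumes fin: "finite B" and orth: "pairwise orthogonal B" and nrm: "\<And>u. u \<in> B \<Longrightarrow> norm u = 1"
  shows "(\<Sum>u\<in>B. (v \<bullet> u)\<^sup>2) \<le> (norm v)\<^sup>2"
proof -
  define w where "w = (\<Sum>u\<in>B. (v \<bullet> u) *\<^sub>R u)"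
  have po: "pairwise (\<lambda>i j. orthogonal ((v \<bullet> i) *\<^sub>R i) ((v \<bullet> j) *\<^sub>R j)) B"
    using orth unfolding pairwise_def by (simp add: orthogonal_clauses)
  have "(norm w)\<^sup>2 = (\<Sum>u\<in>B. (norm ((v \<bullet> u) *\<^sub>R u))\<^sup>2)"
    unfolding w_def by (rule norm_sum_Pythagorean[OF fin po])
  also have "\<dots> = (\<Sum>u\<in>B. (v \<bullet> u)\<^sup>2)"
    by (rule sum.cong) (auto simp: nrm power2_abs)
  finally have w2: "(norm w)\<^sup>2 = (\<Sum>u\<in>B. (v \<bullet> u)\<^sup>2)" .
  have vw: "v \<bullet> w = (\<Sum>u\<in>B. (v \<bullet> u)\<^sup>2)"
    unfolding w_def by (simp add: inner_sum_right power2_eq_square)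
  have "0 \<le> (norm (v - w))\<^sup>2" by simp
  also have "\<dots> = (norm v)\<^sup>2 - 2 * (v \<bullet> w) + (norm w)\<^sup>2"
    by (simp add: power2_norm_eq_inner inner_diff_left inner_diff_right inner_commute)
  finally show ?thesis using w2 vw by simp
qed

lemma sum_abs_inner_le:
  fixes v :: "'a::euclidean_space"
  assumes fin: "finite B" and orth: "pairwise orthogonal B" and nrm: "\<And>u. u \<in> B \<Longrightarrow> norm u = 1"
  shows "(\<Sum>u\<in>B. \<bar>v \<bullet> u\<bar>) \<le> sqrt (card B) * norm v"
proof -
  have "(\<Sum>u\<in>B. \<bar>v \<bullet> u\<bar>)\<^sup>2 \<le> (\<Sum>u\<in>B. \<bar>v \<bullet> u\<bar>\<^sup>2) * card B"
    by (rule sum_squared_le_sum_of_squares)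
  also have "\<dots> \<le> (norm v)\<^sup>2 * card B"
    using bessel[OF assms, of v] by (simp add: mult_right_mono)
  also have "\<dots> = (sqrt (card B) * norm v)\<^sup>2"
    by (simp add: power_mult_distrib)
  finally show ?thesis
    by (rule power2_le_imp_le) simp
qed

fun pl :: "('b \<Rightarrow> 'c::metric_space) \<Rightarrow> 'b list \<Rightarrow> real" where
  "pl f (x # y # xs) = dist (f x) (f y) + pl f (y # xs)"
| "pl f _ = 0"

lemma pl_zip: "(\<Sum>(s,t)\<leftarrow>zip ts (tl ts). dist (f s) (f t)) = pl f ts"
  by (induction f ts rule: pl.induct) auto

lemma pl_nonneg: "pl f xs \<ge> 0"
  by (induction f xs rule: pl.induct) auto

lemma pl_append: "pl f (ys @ y # zs) = pl f (ys @ [y]) + pl f (y # zs)"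
  by (induction ys rule: induct_list012) auto

lemma pl_ge_ends: "xs \<noteq> [] \<Longrightarrow> pl f xs \<ge> dist (f (hd xs)) (f (last xs))"
proof (induction f xs rule: pl.induct)
  case (1 f x y xs)
  then show ?case using dist_triangle[of "f x" "f (last (y#xs))" "f y"] by auto
qed auto

lemma pl_ge_two:
  assumes "y \<in> set xs" "z \<in> set xs"
  shows "pl f xs \<ge> 2 * dist (f y) (f z) - dist (f (hd xs)) (f (last xs))"
proof -
  obtain ys zs where xs: "xs = ys @ y # zs" using assms(1) by (meson split_list)
  have h1: "hd (ys @ [y]) = hd xs" using xs by (cases ys) auto
  have h2: "last (y # zs) = last xs" using xs by simp
  have sp: "pl f xs = pl f (ys @ [y]) + pl f (y # zs)" using xs pl_append by metis
  have A: "pl f (ys @ [y]) \<ge> dist (f (hd xs)) (f y)"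
    using pl_ge_ends[of "ys @ [y]" f] h1 by simp
  have B: "pl f (y # zs) \<ge> dist (f y) (f (last xs))"
    using pl_ge_ends[of "y # zs" f] h2 by simp
  show ?thesis
  proof (cases "z \<in> set (y # zs)")
    case True
    then obtain as bs where e: "y # zs = as @ z # bs" by (meson split_list)
    have sp2: "pl f (y # zs) = pl f (as @ [z]) + pl f (z # bs)" using e pl_append by metis
    have e1: "hd (as @ [z]) = y"
    proof (cases as)
      case Nil then show ?thesis using e by simp
    next
      case (Cons c cs) then show ?thesis using e by simp
    qed
    have e2: "last (z # bs) = last xs"
    proof -
      have "last (y # zs) = last (as @ z # bs)" using e by simp
      also have "\<dots> = last (z # bs)" by simp
      finally show ?thesis using h2 by simp
    qed
    have C: "pl f (as @ [z]) \<ge> dist (f y) (f z)"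
      using pl_ge_ends[of "as @ [z]" f] e1 by simp
    have D: "pl f (z # bs) \<ge> dist (f z) (f (last xs))"
      using pl_ge_ends[of "z # bs" f] e2 by simp
    have T1: "dist (f y) (f z) \<le> dist (f y) (f (hd xs)) + dist (f (hd xs)) (f z)"
      by (rule dist_triangle)
    have T2: "dist (f (hd xs)) (f z) \<le> dist (f (hd xs)) (f (last xs)) + dist (f (last xs)) (f z)"
      by (rule dist_triangle)
    show ?thesis using sp sp2 A C D T1 T2 by (simp add: dist_commute)
  next
    case False
    then have "z \<in> set ys" using assms(2) xs by auto
    then obtain as bs where e0: "ys = as @ z # bs" by (meson split_list)
    have e: "ys @ [y] = as @ z # (bs @ [y])" using e0 by simp
    have sp2: "pl f (ys @ [y]) = pl f (as @ [z]) + pl f (z # (bs @ [y]))" using e pl_append by metis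
    have e1: "hd (as @ [z]) = hd xs"
    proof (cases as)
      case Nil then show ?thesis using xs e0 by simp
    next
      case (Cons c cs) then show ?thesis using xs e0 by simp
    qed
    have C: "pl f (as @ [z]) \<ge> dist (f (hd xs)) (f z)"
      using pl_ge_ends[of "as @ [z]" f] e1 by simp
    have D: "pl f (z # (bs @ [y])) \<ge> dist (f z) (f y)"
      using pl_ge_ends[of "z # (bs @ [y])" f] by simp
    have T1: "dist (f y) (f z) \<le> dist (f y) (f (last xs)) + dist (f (last xs)) (f z)"
      by (rule dist_triangle)
    have T2: "dist (f (last xs)) (f z) \<le> dist (f (last xs)) (f (hd xs)) + dist (f (hd xs)) (f z)"
      by (rule dist_triangle)
    show ?thesis using sp sp2 B C D T1 T2 by (simp add: dist_commute)
  qed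
qed

lemma sorted_hd_last:
  assumes "sorted_wrt (<) xs" "xs \<noteq> []" "y \<in> set xs"
  shows "hd xs \<le> (y::real) \<and> y \<le> last xs"
proof
  show "hd xs \<le> y" using assms by (cases xs) auto
next
  obtain ys z where xs: "xs = ys @ [z]" using assms(2) by (metis rev_exhaust)
  then show "y \<le> last xs" using assms(1,3) by (auto simp: sorted_wrt_append)
qed

lemma pl_proj:
  fixes \<phi> :: "real \<Rightarrow> 'a::euclidean_space"
  assumes fin: "finite B" and orth: "pairwise orthogonal B" and nrm: "\<And>u. u \<in> B \<Longrightarrow> norm u = 1"
  shows "(\<Sum>u\<in>B. pl (\<lambda>t. \<phi> t \<bullet> u) ts) \<le> sqrt (card B) * pl \<phi> ts"
proof (induction \<phi> ts rule: pl.induct)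
  case (1 f x y xs)
  have e: "\<And>u. dist (f x \<bullet> u) (f y \<bullet> u) = \<bar>(f x - f y) \<bullet> u\<bar>"
    by (simp add: dist_real_def inner_diff_left)
  have "(\<Sum>u\<in>B. pl (\<lambda>t. f t \<bullet> u) (x # y # xs))
      = (\<Sum>u\<in>B. \<bar>(f x - f y) \<bullet> u\<bar>) + (\<Sum>u\<in>B. pl (\<lambda>t. f t \<bullet> u) (y # xs))"
    by (simp add: e sum.distrib)
  also have "\<dots> \<le> sqrt (card B) * norm (f x - f y) + sqrt (card B) * pl f (y # xs)"
    using sum_abs_inner_le[OF fin orth nrm, of "f x - f y"] 1 by linarith
  also have "\<dots> = sqrt (card B) * pl f (x # y # xs)"
    by (simp add: dist_norm algebra_simps)
  finally show ?case .
qed auto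

theorem corollary1:
  fixes K :: "'a::euclidean_space set" and \<Theta> :: real
    and \<phi> :: "real \<Rightarrow> 'a" and a b :: real
  assumes "DIM('a) \<ge> 2"
    and "convex_body K"
    and "constant_width K \<Theta>"
    and "a \<le> b"
    and "continuous_on {a..b} \<phi>"
    and "K \<subseteq> convex hull (\<phi> ` {a..b})"
  shows "curve_length \<phi> a b \<ge>
           ereal (2 * (pi - 1) * sqrt ((real DIM('a) - 1) / (2 * pi)) * \<Theta>)"
proof -
  define d where "d = \<phi> b - \<phi> a"
  have Kne: "K \<noteq> {}" and Kc: "compact K" using assms(2) convex_body_def by auto
  have bddK: "bdd_above ((\<lambda>x. x \<bullet> u) ` K)" for u
    using Kc by (intro bounded_imp_bdd_above compact_imp_bounded compact_continuous_image continuous_intros) auto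
  have wid: "\<exists>s\<in>{a..b}. \<exists>t\<in>{a..b}. \<Theta> \<le> (\<phi> t - \<phi> s) \<bullet> u" if u: "norm u = 1" for u
  proof -
    have cont: "continuous_on {a..b} (\<lambda>x. \<phi> x \<bullet> u)"
      by (intro continuous_intros assms(5))
    obtain t where t: "t \<in> {a..b}" "\<And>y. y \<in> {a..b} \<Longrightarrow> \<phi> y \<bullet> u \<le> \<phi> t \<bullet> u"
      using continuous_attains_sup[OF compact_Icc _ cont] assms(4) by auto
    obtain s where s: "s \<in> {a..b}" "\<And>y. y \<in> {a..b} \<Longrightarrow> \<phi> s \<bullet> u \<le> \<phi> y \<bullet> u"
      using continuous_attains_inf[OF compact_Icc _ cont] assms(4) by auto
    have h1: "convex hull (\<phi> ` {a..b}) \<subseteq> {x. u \<bullet> x \<le> \<phi> t \<bullet> u}"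
    proof (rule hull_minimal)
      show "\<phi> ` {a..b} \<subseteq> {x. u \<bullet> x \<le> \<phi> t \<bullet> u}" using t(2) by (auto simp: inner_commute)
    qed (rule convex_halfspace_le)
    have h2: "convex hull (\<phi> ` {a..b}) \<subseteq> {x. (- u) \<bullet> x \<le> - (\<phi> s \<bullet> u)}"
    proof (rule hull_minimal)
      show "\<phi> ` {a..b} \<subseteq> {x. (- u) \<bullet> x \<le> - (\<phi> s \<bullet> u)}" using s(2) by (auto simp: inner_commute)
    qed (rule convex_halfspace_le)
    have "support_fun K u \<le> \<phi> t \<bullet> u"
      unfolding support_fun_def
      by (rule cSUP_least[OF Kne]) (use h1 assms(6) in \<open>auto simp: inner_commute\<close>)
    moreover have "support_fun K (- u) \<le> - (\<phi> s \<bullet> u)"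
      unfolding support_fun_def
      by (rule cSUP_least[OF Kne]) (use h2 assms(6) in \<open>auto simp: inner_commute\<close>)
    moreover have "width_fun K u = \<Theta>"
      using assms(3) u unfolding constant_width_def by auto
    ultimately have "\<Theta> \<le> (\<phi> t - \<phi> s) \<bullet> u"
      unfolding width_fun_def by (simp add: inner_diff_left)
    then show ?thesis using s t by blast
  qed
  have Theta0: "0 \<le> \<Theta>"
  proof -
    obtain u :: 'a where u: "u \<in> Basis" by (meson SOME_Basis)
    obtain x0 where x0: "x0 \<in> K" using Kne by auto
    have "x0 \<bullet> u \<le> support_fun K u"
      unfolding support_fun_def by (rule cSUP_upper[OF x0 bddK])
    moreover have "x0 \<bullet> (- u) \<le> support_fun K (- u)"
      unfolding support_fun_def by (rule cSUP_upper[OF x0 bddK])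
    moreover have "width_fun K u = \<Theta>"
      using assms(3) u unfolding constant_width_def by auto
    ultimately show ?thesis unfolding width_fun_def by simp
  qed
  obtain B where B: "B \<subseteq> {x. d \<bullet> x = 0}" "pairwise orthogonal B"
      "\<And>x. x \<in> B \<Longrightarrow> norm x = 1" "independent B" "card B = dim {x. d \<bullet> x = 0}"
    using orthonormal_basis_subspace[OF subspace_hyperplane[of d]] by metis
  have finB: "finite B" using B(4) independent_imp_finite by blast
  have cardB: "real DIM('a) - 1 \<le> card B"
  proof (cases "d = 0")
    case True
    then show ?thesis using B(5) by simp
  next
    case False
    then show ?thesis using B(5) dim_hyperplane[OF False] assms(1) by simp
  qed
  have ex: "\<forall>u\<in>B. \<exists>p. fst p \<in> {a..b} \<and> snd p \<in> {a..b} \<and> \<Theta> \<le> (\<phi> (snd p) - \<phi> (fst p)) \<bullet> u"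
    using wid B(3) by fastforce
  obtain P where P: "\<forall>u\<in>B. fst (P u) \<in> {a..b} \<and> snd (P u) \<in> {a..b} \<and>
        \<Theta> \<le> (\<phi> (snd (P u)) - \<phi> (fst (P u))) \<bullet> u"
    using bchoice[OF ex] by blast
  define TS where "TS = {a, b} \<union> (fst \<circ> P) ` B \<union> (snd \<circ> P) ` B"
  have finTS: "finite TS" unfolding TS_def using finB by auto
  have TSab: "TS \<subseteq> {a..b}" unfolding TS_def using P assms(4) by auto
  define ts where "ts = sorted_list_of_set TS"
  have setts: "set ts = TS" unfolding ts_def using finTS by simp
  have tsne: "ts \<noteq> []" using setts TS_def by auto
  have sw: "sorted_wrt (<) ts" unfolding ts_def by (simp add: strict_sorted_iff)
  have aTS: "a \<in> TS" "b \<in> TS" unfolding TS_def by auto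
  have hdin: "hd ts \<in> TS" "last ts \<in> TS" using tsne setts by auto
  have hd: "hd ts = a"
  proof -
    have "hd ts \<le> a" using sorted_hd_last[OF sw tsne, of a] aTS setts by simp
    moreover have "a \<le> hd ts" using hdin TSab by auto
    ultimately show ?thesis by simp
  qed
  have last: "last ts = b"
  proof -
    have "b \<le> last ts" using sorted_hd_last[OF sw tsne, of b] aTS setts by simp
    moreover have "last ts \<le> b" using hdin TSab by auto
    ultimately show ?thesis by simp
  qed
  have part: "partition_of a b ts" unfolding partition_of_def using tsne sw hd last by simp
  define S where "S = pl \<phi> ts"
  have each: "2 * \<Theta> \<le> pl (\<lambda>t. \<phi> t \<bullet> u) ts" if u: "u \<in> B" for u
  proof -
    have m: "fst (P u) \<in> set ts" "snd (P u) \<in> set ts" using u setts unfolding TS_def by auto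
    have "2 * dist (\<phi> (snd (P u)) \<bullet> u) (\<phi> (fst (P u)) \<bullet> u)
            - dist (\<phi> (hd ts) \<bullet> u) (\<phi> (last ts) \<bullet> u) \<le> pl (\<lambda>t. \<phi> t \<bullet> u) ts"
      by (rule pl_ge_two[OF m(2) m(1)])
    moreover have "dist (\<phi> (hd ts) \<bullet> u) (\<phi> (last ts) \<bullet> u) = 0"
    proof -
      have "d \<bullet> u = 0" using B(1) u by auto
      then show ?thesis unfolding hd last d_def by (simp add: dist_real_def inner_diff_left)
    qed
    moreover have "\<Theta> \<le> dist (\<phi> (snd (P u)) \<bullet> u) (\<phi> (fst (P u)) \<bullet> u)"
      using P u by (auto simp: dist_real_def inner_diff_left)
    ultimately show ?thesis by linarith
  qed
  have "card B * (2 * \<Theta>) \<le> (\<Sum>u\<in>B. pl (\<lambda>t. \<phi> t \<bullet> u) ts)"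
    using sum_mono[of B "\<lambda>_. 2 * \<Theta>", OF each] by simp
  also have "\<dots> \<le> sqrt (card B) * S"
    unfolding S_def by (rule pl_proj[OF finB B(2) B(3)])
  finally have ineq: "card B * (2 * \<Theta>) \<le> sqrt (card B) * S" .
  have cB1: "1 \<le> real (card B)" using cardB assms(1) by linarith
  have sq: "real (card B) = sqrt (card B) * sqrt (card B)" by simp
  have sqpos: "0 < sqrt (real (card B))" using cB1 by simp
  have S1: "2 * sqrt (card B) * \<Theta> \<le> S"
  proof -
    have "sqrt (card B) * (2 * sqrt (card B) * \<Theta>) \<le> sqrt (card B) * S"
      using ineq sq by (simp add: algebra_simps)
    then show ?thesis using sqpos by simp
  qed
  have pi1: "pi - 1 \<le> sqrt (2 * pi)"
  proof (rule real_le_rsqrt)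
    have "3 * 0.8 \<le> pi * (4 - pi)"
      using pi_approx by (intro mult_mono) auto
    then show "(pi - 1)\<^sup>2 \<le> 2 * pi" by (simp add: power2_eq_square algebra_simps)
  qed
  have "2 * (pi - 1) * sqrt ((real DIM('a) - 1) / (2 * pi)) * \<Theta>
        = 2 * ((pi - 1) / sqrt (2 * pi)) * sqrt (real DIM('a) - 1) * \<Theta>"
    by (simp add: real_sqrt_divide)
  also have "\<dots> \<le> 2 * 1 * sqrt (card B) * \<Theta>"
  proof -
    have "(pi - 1) / sqrt (2 * pi) \<le> 1" using pi1 by (simp add: divide_le_eq)
    moreover have "sqrt (real DIM('a) - 1) \<le> sqrt (card B)" using cardB by simp
    moreover have "0 \<le> (pi - 1) / sqrt (2 * pi)" using pi_gt3 by simp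
    ultimately have "((pi - 1) / sqrt (2 * pi)) * sqrt (real DIM('a) - 1) \<le> 1 * sqrt (card B)"
      by (intro mult_mono) auto
    then have "((pi - 1) / sqrt (2 * pi)) * sqrt (real DIM('a) - 1) * \<Theta> \<le> 1 * sqrt (card B) * \<Theta>"
      using Theta0 by (rule mult_right_mono)
    then show ?thesis by (simp only: mult.assoc)
  qed
  also have "\<dots> \<le> S" using S1 by simp
  finally have fin: "2 * (pi - 1) * sqrt ((real DIM('a) - 1) / (2 * pi)) * \<Theta> \<le> S" .
  have "ereal S \<le> curve_length \<phi> a b"
    unfolding curve_length_def S_def pl_zip[symmetric]
    by (rule SUP_upper) (use part in simp)
  then show ?thesis using fin by (meson ereal_less_eq(3) order_trans)
qed

end
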